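(* Let $\mathcal{I}$ be the set of channels $\rho\mapsto U\rho U^\dagger$ with $U=H^{\otimes n}DH^{\otimes n}$, where $D$ is a product of gates from $\{Z,CZ\}$ (acting on arbitrary qubits/pairs of qubits) containing at least one $CZ$ gate. There is an absolute constant $C$ such that for every sample $S=(z_1,\ldots,z_m)$ with $z_i\in\mathbb{F}_2^n\times\mathbb{F}_2^n$, \[ \hat{R}_S(\mathcal{F}(\mathcal{I}))\le\frac{C\,n}{\sqrt m}\max_{\Phi\in\mathcal{I}}\|\vec f_\Phi\|_\infty . \]
   Context: $H$ is the Hadamard gate, $Z=\mathrm{diag}(1,-1)$, $CZ$ the controlled-$Z$ gate. For a channel $\Phi$ on $n$ qubits, $f_\Phi(x,y)=\mathrm{Tr}[\Phi(|x\rangle\langle x|)\,|y\rangle\langle y|]$ for $x,y\in\mathbb{F}_2^n$; $\mathcal{F}(\Omega)=\{f_\Phi:\Phi\in\Omega\}$; $\vec f_\Phi=(f_\Phi(z_1),\ldots,f_\Phi(z_m))$. Empirical Rademacher complexity: $\hat{R}_S(\mathcal{G})=\mathbb{E}_{\epsilon}[\sup_{g\in\mathcal{G}}\frac1m\sum_i\epsilon_i g(z_i)]$, $\epsilon_i$ i.i.d. uniform on $\{\pm1\}$. *)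

theory Defs
  imports Complex_Main
begin

text \<open>Computational basis states of n qubits: bit strings x in F_2^n, as bool lists of length n.\<close>
type_synonym bits = "bool list"

definition bitvecs :: "nat \<Rightarrow> bits set" where
  "bitvecs n = {xs. length xs = n}"

type_synonym qmat = "bits \<Rightarrow> bits \<Rightarrow> complex"

definition mmul :: "nat \<Rightarrow> qmat \<Rightarrow> qmat \<Rightarrow> qmat" where
  "mmul n A B = (\<lambda>y x. \<Sum>z\<in>bitvecs n. A y z * B z x)"

definition adj :: "qmat \<Rightarrow> qmat" where
  "adj A = (\<lambda>y x. cnj (A x y))"

definition idm :: qmat where
  "idm = (\<lambda>y x. if y = x then 1 else 0)"

definition ketbra :: "bits \<Rightarrow> qmat" where
  "ketbra v = (\<lambda>y x. if y = v \<and> x = v then 1 else 0)"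

definition mtrace :: "nat \<Rightarrow> qmat \<Rightarrow> complex" where
  "mtrace n A = (\<Sum>x\<in>bitvecs n. A x x)"

text \<open>H tensor n: entries (-1)^(x.y) / sqrt(2^n).\<close>
definition Hn :: "nat \<Rightarrow> qmat" where
  "Hn n = (\<lambda>y x. complex_of_real
      ((-1) ^ card {i. i < n \<and> y ! i \<and> x ! i} / sqrt (2 ^ n)))"

text \<open>Gates: Z on qubit i, CZ on qubits i,j (0-based).\<close>
datatype gate = GZ nat | GCZ nat nat

fun valid_gate :: "nat \<Rightarrow> gate \<Rightarrow> bool" where
  "valid_gate n (GZ i) = (i < n)"
| "valid_gate n (GCZ i j) = (i < n \<and> j < n \<and> i \<noteq> j)"

fun is_CZ :: "gate \<Rightarrow> bool" where
  "is_CZ (GZ _) = False"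
| "is_CZ (GCZ _ _) = True"

fun gate_mat :: "gate \<Rightarrow> qmat" where
  "gate_mat (GZ i) = (\<lambda>y x. if y = x then (if x ! i then -1 else 1) else 0)"
| "gate_mat (GCZ i j) = (\<lambda>y x. if y = x then (if x ! i \<and> x ! j then -1 else 1) else 0)"

definition D_of :: "nat \<Rightarrow> gate list \<Rightarrow> qmat" where
  "D_of n gs = foldr (\<lambda>g A. mmul n (gate_mat g) A) gs idm"

definition U_of :: "nat \<Rightarrow> gate list \<Rightarrow> qmat" where
  "U_of n gs = mmul n (mmul n (Hn n) (D_of n gs)) (Hn n)"

definition unitary_channel :: "nat \<Rightarrow> qmat \<Rightarrow> (qmat \<Rightarrow> qmat)" where
  "unitary_channel n U = (\<lambda>\<rho>. mmul n (mmul n U \<rho>) (adj U))"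

definition chanI :: "nat \<Rightarrow> (qmat \<Rightarrow> qmat) set" where
  "chanI n = {unitary_channel n (U_of n gs) | gs.
      (\<forall>g\<in>set gs. valid_gate n g) \<and> (\<exists>g\<in>set gs. is_CZ g)}"

definition fPhi :: "nat \<Rightarrow> (qmat \<Rightarrow> qmat) \<Rightarrow> bits \<times> bits \<Rightarrow> real" where
  "fPhi n \<Phi> z = Re (mtrace n (mmul n (\<Phi> (ketbra (fst z))) (ketbra (snd z))))"

definition Fclass :: "nat \<Rightarrow> (bits \<times> bits \<Rightarrow> real) set" where
  "Fclass n = fPhi n ` chanI n"

text \<open>Empirical Rademacher complexity: expectation over uniform eps in {+-1}^m,
  encoded by bool lists of length m (True = +1).\<close>
definition sgn_bit :: "bool \<Rightarrow> real" where
  "sgn_bit b = (if b then 1 else -1)"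

definition emp_rademacher :: "'z list \<Rightarrow> ('z \<Rightarrow> real) set \<Rightarrow> real" where
  "emp_rademacher S G =
     (\<Sum>eps\<in>bitvecs (length S).
        (SUP g\<in>G. (1 / real (length S)) * (\<Sum>i<length S. sgn_bit (eps ! i) * g (S ! i))))
     / 2 ^ length S"

end

theory Submission imports Defs begin
lemma fact_double: "2 ^ k * fact k \<le> (fact (2*k) :: real)"
proof (induction k)
  case 0 then show ?case by simp
next
  case (Suc k)
  have e1: "fact (2 * Suc k) = (of_nat (2*k+2) * of_nat (2*k+1)) * (fact (2*k)::real)"
    by (simp add: fact_Suc algebra_simps)
  have e2: "2 ^ Suc k * fact (Suc k) = (2 * of_nat (k+1)) * (2 ^ k * (fact k::real))"
    by (simp add: fact_Suc algebra_simps)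
  have a: "2 * of_nat (k+1) \<le> (of_nat (2*k+2) * of_nat (2*k+1) :: real)"
  proof -
    have "2 * (k+1) \<le> (2*k+2) * (2*k+1)" by simp
    then show ?thesis by (metis of_nat_le_iff of_nat_mult of_nat_numeral)
  qed
  have "(2 * of_nat (k+1)) * (2 ^ k * (fact k::real)) \<le> (of_nat (2*k+2) * of_nat (2*k+1)) * (fact (2*k)::real)"
    by (rule mult_mono[OF a Suc.IH]) auto
  then show ?case by (simp only: e1 e2)
qed
lemma cosh_term: "x^(2*k) / fact (2*k) \<le> ((x::real)^2/2)^k / fact k"
proof -
  have p: "x^(2*k) = (x^2)^k" by (simp add: power_mult)
  have nn: "0 \<le> (x^2)^k" by simp
  have "(x^2)^k / fact(2*k) \<le> (x^2)^k / (2^k*fact k)"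
    by (rule divide_left_mono[OF fact_double nn]) simp
  also have "(x^2)^k / (2^k*fact k) = (x^2/2)^k / fact k" by (simp add: power_divide)
  finally show ?thesis by (simp only: p)
qed

lemma cosh_le: "cosh (x::real) \<le> exp (x^2/2)"
proof -
  have e: "(\<lambda>k. (x^2/2)^k /\<^sub>R fact k) sums exp (x^2/2)" by (rule exp_converges)
  have e2: "(\<lambda>n. if even n then (x^2/2)^(n div 2) /\<^sub>R fact (n div 2) else 0) sums exp (x^2/2)"
    using sums_if[OF sums_zero e] by simp
  show ?thesis
  proof (rule sums_le[OF _ cosh_converges e2])
    fix n
    show "(if even n then x ^ n /\<^sub>R fact n else 0) \<le> (if even n then (x^2/2)^(n div 2) /\<^sub>R fact (n div 2) else 0)"
    proof (cases "even n")
      case True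
      then obtain k where n: "n = 2*k" by blast
      have "x ^ n /\<^sub>R fact n \<le> (x^2/2)^(n div 2) /\<^sub>R fact (n div 2)"
      proof -
        have d: "(2*k) div 2 = k" by simp
        show ?thesis using cosh_term[of x k] by (simp only: n d real_scaleR_def divide_inverse_commute)
      qed
      then show ?thesis using True by simp
    qed simp
  qed
qed
lemma bitvecs_Suc: "bitvecs (Suc m) = (\<lambda>(b,xs). b#xs) ` (UNIV \<times> bitvecs m)"
  unfolding bitvecs_def
  by (auto simp: image_iff length_Suc_conv)

lemma finite_bitvecs: "finite (bitvecs m)"
proof -
  have "bitvecs m = {xs. set xs \<subseteq> (UNIV::bool set) \<and> length xs = m}" by (auto simp: bitvecs_def)
  then show ?thesis using finite_lists_length_eq[of "UNIV::bool set" m] by simp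
qed

lemma card_bitvecs: "card (bitvecs m) = 2^m"
proof -
  have "bitvecs m = {xs. set xs \<subseteq> (UNIV::bool set) \<and> length xs = m}" by (auto simp: bitvecs_def)
  then show ?thesis using card_lists_length_eq[of "UNIV::bool set" m] by simp
qed

lemma hoeff: "(\<Sum>eps\<in>bitvecs m. exp (\<Sum>i<m. sgn_bit (eps!i) * c i)) \<le> 2^m * exp ((\<Sum>i<m. (c i)^2)/2)"
proof (induction m arbitrary: c)
  case 0 then show ?case by (simp add: bitvecs_def)
next
  case (Suc m)
  have inj: "inj_on (\<lambda>(b,xs). b#xs) (UNIV \<times> bitvecs m)" by (auto simp: inj_on_def)
  have split: "(\<Sum>i<Suc m. sgn_bit ((b#xs)!i) * c i) = sgn_bit b * c 0 + (\<Sum>i<m. sgn_bit (xs!i) * c (Suc i))" for b xs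
    by (subst sum.lessThan_Suc_shift) simp
  define E where "E = (\<Sum>xs\<in>bitvecs m. exp (\<Sum>i<m. sgn_bit (xs!i) * c (Suc i)))"
  have "(\<Sum>eps\<in>bitvecs (Suc m). exp (\<Sum>i<Suc m. sgn_bit (eps!i) * c i))
     = (\<Sum>p\<in>UNIV \<times> bitvecs m. exp (\<Sum>i<Suc m. sgn_bit (((\<lambda>(b,xs). b#xs) p)!i) * c i))"
    unfolding bitvecs_Suc by (rule sum.reindex[OF inj, unfolded comp_def])
  also have "\<dots> = (\<Sum>p\<in>UNIV \<times> bitvecs m. exp (sgn_bit (fst p) * c 0) * exp (\<Sum>i<m. sgn_bit (snd p!i) * c (Suc i)))"
    by (rule sum.cong[OF refl]) (simp add: case_prod_beta split exp_add del: sum.lessThan_Suc)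
  also have "\<dots> = (\<Sum>b\<in>UNIV. \<Sum>xs\<in>bitvecs m. exp (sgn_bit b * c 0) * exp (\<Sum>i<m. sgn_bit (xs!i) * c (Suc i)))"
    by (rule sum.cartesian_product[symmetric, unfolded case_prod_beta])
  also have "\<dots> = (\<Sum>b\<in>UNIV. exp (sgn_bit b * c 0) * E)"
    by (simp add: E_def sum_distrib_left)
  also have "\<dots> = (exp (c 0) + exp (- c 0)) * E"
    by (simp add: UNIV_bool sgn_bit_def distrib_right)
  also have "\<dots> \<le> (2 * exp ((c 0)^2/2)) * (2^m * exp ((\<Sum>i<m. (c (Suc i))^2)/2))"
  proof (rule mult_mono)
    show "exp (c 0) + exp (- c 0) \<le> 2 * exp ((c 0)^2/2)"
      using cosh_le[of "c 0"] by (simp add: cosh_def)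
    show "E \<le> 2^m * exp ((\<Sum>i<m. (c (Suc i))^2)/2)" unfolding E_def by (rule Suc.IH)
    show "0 \<le> 2 * exp ((c 0)^2/2)" by simp
    show "0 \<le> E" unfolding E_def by (rule sum_nonneg) simp
  qed
  also have "\<dots> = 2 ^ Suc m * (exp ((c 0)^2/2) * exp ((\<Sum>i<m. (c (Suc i))^2)/2))"
    by simp
  also have "\<dots> = 2 ^ Suc m * exp ((\<Sum>i<Suc m. (c i)^2)/2)"
    by (simp only: sum.lessThan_Suc_shift add_divide_distrib exp_add)
  finally show ?case .
qed

lemma avg_ln: fixes y :: "'a \<Rightarrow> real"
  assumes "finite E" "E \<noteq> {}"
  shows "(\<Sum>e\<in>E. y e) \<le> real (card E) * ln ((\<Sum>e\<in>E. exp (y e)) / real (card E))"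
proof -
  define A where "A = (\<Sum>e\<in>E. exp (y e)) / real (card E)"
  have cpos: "real (card E) > 0" using assms by (simp add: card_gt_0_iff)
  have Apos: "A > 0" unfolding A_def using assms cpos by (intro divide_pos_pos sum_pos) auto
  have "(\<Sum>e\<in>E. 1 + (y e - ln A)) \<le> (\<Sum>e\<in>E. exp (y e - ln A))"
    by (rule sum_mono) (rule exp_ge_add_one_self)
  also have "\<dots> = (\<Sum>e\<in>E. exp (y e)) / A"
    using Apos by (simp add: exp_diff sum_divide_distrib)
  also have "\<dots> = real (card E)" unfolding A_def using cpos assms Apos
    by (simp add: A_def field_simps)
  finally have "real (card E) + (\<Sum>e\<in>E. y e) - real (card E) * ln A \<le> real (card E)"
    by (simp add: sum.distrib sum_subtractf)
  then show ?thesis unfolding A_def[symmetric] by linarith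
qed


lemma massart:
  fixes G :: "('z \<Rightarrow> real) set" and S :: "'z list" and M :: real and k :: nat
  assumes fin: "finite G" and ne: "G \<noteq> {}" and cG: "card G \<le> 2^k" and k1: "k \<ge> 1"
    and m1: "length S \<ge> 1" and M0: "M \<ge> 0"
    and bd: "\<And>g i. g \<in> G \<Longrightarrow> i < length S \<Longrightarrow> \<bar>g (S!i)\<bar> \<le> M"
  shows "emp_rademacher S G \<le> 2 * sqrt (real k) * M / sqrt (real (length S))"
proof -
  define m where "m = length S"
  have mpos: "real m > 0" using m1 unfolding m_def by (cases S) auto
  define a where "a = (\<lambda>g e. \<Sum>i<m. sgn_bit (e!i) * g (S!i))"
  have emp: "emp_rademacher S G = (\<Sum>e\<in>bitvecs m. (SUP g\<in>G. (1 / real m) * a g e)) / 2^m"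
    unfolding emp_rademacher_def a_def m_def ..
  show ?thesis
  proof (cases "M = 0")
    case True
    have "a g e = 0" if "g \<in> G" for g e
      unfolding a_def using bd[OF that] True by (intro sum.neutral) (auto simp: m_def)
    then have "(SUP g\<in>G. (1 / real m) * a g e) = 0" for e
      using ne by (simp add: cSUP_const)
    then show ?thesis unfolding emp using True by simp
  next
    case False
    with M0 have Mpos: "M > 0" by simp
    define s where "s = sqrt (real m)"
    define r where "r = sqrt (real k)"
    have spos: "s > 0" unfolding s_def using mpos by simp
    have rpos: "r > 0" unfolding r_def using k1 by simp
    have s2: "s^2 = real m" unfolding s_def using mpos by simp
    have r2: "r^2 = real k" unfolding r_def by simp
    define l where "l = r / (M * s)"
    have lpos: "l > 0" unfolding l_def using rpos Mpos spos by simp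
    define L where "L = (\<lambda>e. ln (\<Sum>g\<in>G. exp (l * a g e)))"
    have step1: "(SUP g\<in>G. (1 / real m) * a g e) \<le> (1 / real m) * (L e / l)" for e
    proof (rule cSUP_least[OF ne])
      fix g assume g: "g \<in> G"
      have "exp (l * a g e) \<le> (\<Sum>g\<in>G. exp (l * a g e))"
        using fin g by (intro member_le_sum) auto
      then have "l * a g e \<le> L e" unfolding L_def
        by (metis exp_le_cancel_iff exp_ln exp_gt_zero order.strict_trans2)
      then have "a g e \<le> L e / l" using lpos by (simp add: field_simps)
      then show "(1 / real m) * a g e \<le> (1 / real m) * (L e / l)"
        using mpos by (intro mult_left_mono) auto
    qed
    have finB: "finite (bitvecs m)" by (rule finite_bitvecs)
    have neB: "bitvecs m \<noteq> {}" by (simp add: bitvecs_def ex_in_conv[symmetric]) (metis length_replicate)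
    have cB: "card (bitvecs m) = 2^m" by (rule card_bitvecs)
    have sum1: "(\<Sum>e\<in>bitvecs m. (SUP g\<in>G. (1 / real m) * a g e)) \<le> (1 / (real m * l)) * (\<Sum>e\<in>bitvecs m. L e)"
    proof -
      have "(\<Sum>e\<in>bitvecs m. (SUP g\<in>G. (1 / real m) * a g e)) \<le> (\<Sum>e\<in>bitvecs m. (1 / (real m * l)) * L e)"
        by (rule sum_mono) (use step1 in simp)
      then show ?thesis by (simp add: sum_distrib_left)
    qed
    have expL: "exp (L e) = (\<Sum>g\<in>G. exp (l * a g e))" for e
      unfolding L_def using fin ne by (intro exp_ln sum_pos) auto
    have hg: "(\<Sum>e\<in>bitvecs m. exp (l * a g e)) \<le> 2^m * exp (real m * (l * M)^2 / 2)" if g: "g \<in> G" for g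
    proof -
      have "(\<Sum>e\<in>bitvecs m. exp (l * a g e)) = (\<Sum>e\<in>bitvecs m. exp (\<Sum>i<m. sgn_bit (e!i) * (l * g (S!i))))"
        unfolding a_def by (simp add: sum_distrib_left algebra_simps)
      also have "\<dots> \<le> 2^m * exp ((\<Sum>i<m. (l * g (S!i))^2)/2)" by (rule hoeff)
      also have "(\<Sum>i<m. (l * g (S!i))^2) \<le> (\<Sum>i<m. (l * M)^2)"
      proof (rule sum_mono)
        fix i assume "i \<in> {..<m}"
        then have "\<bar>g (S!i)\<bar> \<le> M" using bd[OF g] by (simp add: m_def)
        then have "\<bar>l * g (S!i)\<bar> \<le> l * M" using lpos by (simp add: abs_mult)
        then show "(l * g (S!i))^2 \<le> (l * M)^2"
          by (metis abs_ge_zero abs_le_square_iff abs_of_nonneg order.trans lpos M0 less_imp_le mult_nonneg_nonneg)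
      qed
      then have "exp ((\<Sum>i<m. (l * g (S!i))^2)/2) \<le> exp (real m * (l * M)^2 / 2)" by simp
      then have "2^m * exp ((\<Sum>i<m. (l * g (S!i))^2)/2) \<le> 2^m * exp (real m * (l * M)^2 / 2)" by simp
      finally show ?thesis .
    qed
    have sumexp: "(\<Sum>e\<in>bitvecs m. exp (L e)) \<le> real (card G) * (2^m * exp (real m * (l * M)^2 / 2))"
    proof -
      have "(\<Sum>e\<in>bitvecs m. exp (L e)) = (\<Sum>g\<in>G. \<Sum>e\<in>bitvecs m. exp (l * a g e))"
        by (simp add: expL sum.swap[of _ G])
      also have "\<dots> \<le> (\<Sum>g\<in>G. 2^m * exp (real m * (l * M)^2 / 2))"
        by (rule sum_mono) (rule hg)
      finally show ?thesis by simp
    qed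
    have jen: "(\<Sum>e\<in>bitvecs m. L e) \<le> 2^m * ln ((\<Sum>e\<in>bitvecs m. exp (L e)) / 2^m)"
      using avg_ln[OF finB neB, of L] cB by simp
    have cGpos: "real (card G) > 0" using fin ne by (simp add: card_gt_0_iff)
    have "ln ((\<Sum>e\<in>bitvecs m. exp (L e)) / 2^m) \<le> ln (real (card G) * exp (real m * (l * M)^2 / 2))"
    proof (rule ln_mono)
      show "0 < (\<Sum>e\<in>bitvecs m. exp (L e)) / 2^m" using finB neB by (intro divide_pos_pos sum_pos) auto
      show "(\<Sum>e\<in>bitvecs m. exp (L e)) / 2^m \<le> real (card G) * exp (real m * (l * M)^2 / 2)"
      proof -
        define X where "X = exp (real m * (l * M)^2 / 2)"
        have "real (card G) * (2^m * X) = (real (card G) * X) * 2^m" by (simp only: ac_simps)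
        then show ?thesis using sumexp unfolding X_def[symmetric] by (simp only: pos_divide_le_eq zero_less_numeral zero_less_power)
      qed
    qed
    also have "\<dots> = ln (real (card G)) + real m * (l * M)^2 / 2"
      using cGpos by (simp add: ln_mult)
    also have "ln (real (card G)) \<le> real k"
    proof -
      have "ln (real (card G)) \<le> ln (2^k)"
      proof (rule ln_mono)
        show "real (card G) \<le> 2^k" using cG by (metis of_nat_le_iff of_nat_numeral of_nat_power)
      qed (use cGpos in auto)
      also have "\<dots> = real k * ln 2" by (simp add: ln_realpow)
      also have "\<dots> \<le> real k" using ln_2_less_1 by (intro mult_left_le) auto
      finally show ?thesis .
    qed
    finally have lnb: "ln ((\<Sum>e\<in>bitvecs m. exp (L e)) / 2^m) \<le> real k + real m * (l * M)^2 / 2" by simp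
    have "emp_rademacher S G \<le> (1 / (real m * l)) * (\<Sum>e\<in>bitvecs m. L e) / 2^m"
      unfolding emp by (rule divide_right_mono[OF sum1]) simp
    also have "\<dots> \<le> (1 / (real m * l)) * (2^m * (real k + real m * (l * M)^2 / 2)) / 2^m"
    proof -
      have "(\<Sum>e\<in>bitvecs m. L e) \<le> 2^m * (real k + real m * (l * M)^2 / 2)"
        using jen lnb by (meson mult_left_mono order.trans zero_le_numeral zero_le_power)
      then show ?thesis using mpos lpos by (intro divide_right_mono mult_left_mono) auto
    qed
    also have "\<dots> = real k / (real m * l) + l * M^2 / 2"
      using mpos lpos by (simp add: field_simps power2_eq_square)
    also have "\<dots> = 3/2 * (r * M / s)"
    proof -
      have km: "real k = r * r" "real m = s * s" using r2 s2 by (simp_all add: power2_eq_square)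
      have 1: "real k / (real m * l) = r * M / s"
        unfolding km l_def using spos rpos Mpos by (simp add: field_simps)
      have 2: "l * M^2 / 2 = (r * M / s) / 2"
        unfolding l_def using spos rpos Mpos by (simp add: field_simps power2_eq_square)
      show ?thesis unfolding 1 2 by simp
    qed
    also have "\<dots> \<le> 2 * (r * M / s)"
    proof -
      have "0 < r * M / s" using rpos Mpos spos by simp
      moreover have "\<And>t::real. 0 < t \<Longrightarrow> 3/2*t \<le> 2*t" by simp
      ultimately show ?thesis by blast
    qed
    finally show ?thesis unfolding r_def s_def m_def by simp
  qed
qed


fun gsign :: "gate \<Rightarrow> bits \<Rightarrow> complex" where
  "gsign (GZ i) x = (if x ! i then -1 else 1)"
| "gsign (GCZ i j) x = (if x ! i \<and> x ! j then -1 else 1)"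

fun gkey :: "gate \<Rightarrow> nat \<times> nat" where
  "gkey (GZ i) = (i, i)"
| "gkey (GCZ i j) = (i, j)"

lemma gsign_key: "gsign g x = (if x ! fst (gkey g) \<and> x ! snd (gkey g) then -1 else 1)"
  by (cases g) auto

lemma gkey_valid: "valid_gate n g \<Longrightarrow> gkey g \<in> {..<n} \<times> {..<n}"
  by (cases g) auto

lemma gate_mat_diag: "gate_mat g y x = (if y = x then gsign g x else 0)"
  by (cases g) auto

definition sgnf :: "gate list \<Rightarrow> bits \<Rightarrow> complex" where
  "sgnf gs x = prod_list (map (\<lambda>g. gsign g x) gs)"

definition sgT :: "(nat \<times> nat) set \<Rightarrow> bits \<Rightarrow> complex" where
  "sgT T x = (-1) ^ card {p\<in>T. x ! fst p \<and> x ! snd p}"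

lemma sign_toggle:
  assumes "finite T"
  shows "(-1::complex) ^ card {p\<in>(if k\<in>T then T-{k} else insert k T). P p}
       = (if P k then -1 else 1) * (-1) ^ card {p\<in>T. P p}"
proof -
  define A where "A = {p\<in>T-{k}. P p}"
  have fA: "finite A" "k \<notin> A" using assms by (auto simp: A_def)
  show ?thesis
  proof (cases "k \<in> T")
    case True
    show ?thesis
    proof (cases "P k")
      case True
      have "{p\<in>T. P p} = insert k A" using \<open>k\<in>T\<close> True by (auto simp: A_def)
      moreover have "{p\<in>(if k\<in>T then T-{k} else insert k T). P p} = A" using \<open>k\<in>T\<close> by (auto simp: A_def)
      ultimately show ?thesis using fA True by simp
    next
      case False
      have "{p\<in>T. P p} = A" using \<open>k\<in>T\<close> False by (auto simp: A_def)
      moreover have "{p\<in>(if k\<in>T then T-{k} else insert k T). P p} = A" using \<open>k\<in>T\<close> by (auto simp: A_def)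
      ultimately show ?thesis using False by simp
    qed
  next
    case kT: False
    show ?thesis
    proof (cases "P k")
      case True
      have "{p\<in>T. P p} = A" using kT by (auto simp: A_def)
      moreover have "{p\<in>(if k\<in>T then T-{k} else insert k T). P p} = insert k A" using kT True by (auto simp: A_def)
      ultimately show ?thesis using fA True by simp
    next
      case False
      have "{p\<in>T. P p} = A" using kT by (auto simp: A_def)
      moreover have "{p\<in>(if k\<in>T then T-{k} else insert k T). P p} = A" using kT False by (auto simp: A_def)
      ultimately show ?thesis using False by simp
    qed
  qed
qed

lemma sgnf_T:
  assumes "\<forall>g\<in>set gs. valid_gate n g"
  shows "\<exists>T\<subseteq>{..<n} \<times> {..<n}. \<forall>x. sgnf gs x = sgT T x"
  using assms
proof (induction gs)
  case Nil
  show ?case by (intro exI[of _ "{}"]) (simp add: sgnf_def sgT_def)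
next
  case (Cons g gs)
  then obtain T where T: "T \<subseteq> {..<n} \<times> {..<n}" "\<forall>x. sgnf gs x = sgT T x" by auto
  define k where "k = gkey g"
  have kin: "k \<in> {..<n} \<times> {..<n}" unfolding k_def using Cons.prems gkey_valid by auto
  have finT: "finite T" using T(1) finite_subset by blast
  define T' where "T' = (if k\<in>T then T-{k} else insert k T)"
  have "T' \<subseteq> {..<n} \<times> {..<n}" unfolding T'_def using T(1) kin by auto
  moreover have "sgnf (g#gs) x = sgT T' x" for x
  proof -
    have "sgnf (g#gs) x = gsign g x * sgT T x" using T(2) by (simp add: sgnf_def)
    also have "\<dots> = sgT T' x"
      unfolding sgT_def T'_def gsign_key k_def[symmetric]
      by (subst sign_toggle[OF finT]) simp
    finally show ?thesis .
  qed
  ultimately show ?case by blast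
qed


lemma sum_single_bitvec:
  assumes "z \<in> bitvecs n"
  shows "(\<Sum>w\<in>bitvecs n. (if z = w then c w else 0) * B w) = c z * (B z :: complex)"
proof -
  have "(\<Sum>w\<in>bitvecs n. (if z = w then c w else 0) * B w) = (\<Sum>w\<in>bitvecs n. if w = z then c z * B z else 0)"
    by (rule sum.cong) auto
  also have "\<dots> = c z * B z" using assms finite_bitvecs by (simp add: sum.delta)
  finally show ?thesis .
qed

lemma D_of_eq:
  assumes "z \<in> bitvecs n"
  shows "D_of n gs z x = (if z = x then sgnf gs z else 0)"
proof (induction gs arbitrary: x)
  case Nil
  show ?case by (simp add: D_of_def idm_def sgnf_def)
next
  case (Cons g gs)
  have "D_of n (g#gs) z x = mmul n (gate_mat g) (D_of n gs) z x" by (simp add: D_of_def)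
  also have "\<dots> = (\<Sum>w\<in>bitvecs n. (if z = w then gsign g w else 0) * D_of n gs w x)"
    by (simp add: mmul_def gate_mat_diag)
  also have "\<dots> = gsign g z * D_of n gs z x" by (rule sum_single_bitvec[OF assms])
  also have "\<dots> = (if z = x then sgnf (g#gs) z else 0)" using Cons.IH by (simp add: sgnf_def)
  finally show ?case .
qed

definition V :: "nat \<Rightarrow> (bits \<Rightarrow> complex) \<Rightarrow> qmat" where
  "V n s = mmul n (\<lambda>y x. \<Sum>z\<in>bitvecs n. Hn n y z * (if z = x then s z else 0)) (Hn n)"

lemma U_of_V: "U_of n gs = V n (sgnf gs)"
proof -
  have "mmul n (Hn n) (D_of n gs) = (\<lambda>y x. \<Sum>z\<in>bitvecs n. Hn n y z * (if z = x then sgnf gs z else 0))"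
    unfolding mmul_def by (intro ext sum.cong refl) (simp add: D_of_eq)
  then show ?thesis by (simp add: U_of_def V_def)
qed

lemma V_cong:
  assumes "\<And>x. x \<in> bitvecs n \<Longrightarrow> s x = s' x"
  shows "V n s = V n s'"
proof -
  have "(\<lambda>y x. \<Sum>z\<in>bitvecs n. Hn n y z * (if z = x then s z else 0))
      = (\<lambda>y x. \<Sum>z\<in>bitvecs n. Hn n y z * (if z = x then s' z else 0))"
    by (intro ext sum.cong refl) (auto simp: assms)
  then show ?thesis by (simp add: V_def)
qed

lemma chanI_sub: "chanI n \<subseteq> (\<lambda>T. unitary_channel n (V n (sgT T))) ` Pow ({..<n} \<times> {..<n})"
proof
  fix \<Phi> assume "\<Phi> \<in> chanI n"
  then obtain gs where \<Phi>: "\<Phi> = unitary_channel n (U_of n gs)" and v: "\<forall>g\<in>set gs. valid_gate n g"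
    unfolding chanI_def by blast
  obtain T where T: "T \<subseteq> {..<n} \<times> {..<n}" "\<forall>x. sgnf gs x = sgT T x" using sgnf_T[OF v] by blast
  have "sgnf gs = sgT T" using T(2) by auto
  then have "\<Phi> = unitary_channel n (V n (sgT T))" by (simp add: \<Phi> U_of_V)
  then show "\<Phi> \<in> (\<lambda>T. unitary_channel n (V n (sgT T))) ` Pow ({..<n} \<times> {..<n})" using T(1) by blast
qed

lemma chanI_fin: "finite (chanI n)" "card (chanI n) \<le> 2 ^ (n * n)"
proof -
  let ?B = "(\<lambda>T. unitary_channel n (V n (sgT T))) ` Pow ({..<n} \<times> {..<n})"
  have fB: "finite ?B" by simp
  show "finite (chanI n)" using finite_subset[OF chanI_sub fB] .
  have "card (chanI n) \<le> card ?B" by (rule card_mono[OF fB chanI_sub])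
  also have "\<dots> \<le> card (Pow ({..<n} \<times> {..<n}))" by (rule card_image_le) simp
  also have "\<dots> = 2 ^ (n * n)" by (simp add: card_Pow card_cartesian_product)
  finally show "card (chanI n) \<le> 2 ^ (n * n)" .
qed

lemma chanI_ne: "n \<ge> 2 \<Longrightarrow> chanI n \<noteq> {}"
  unfolding chanI_def
  by (rule ccontr) (auto dest: spec[of _ "[GCZ 0 1]"])


theorem mainTheorem8:
  shows "\<exists>C::real. \<forall>(n::nat) (S::(bits \<times> bits) list).
     n \<ge> 2 \<longrightarrow> length S \<ge> 1 \<longrightarrow>
     (\<forall>z\<in>set S. fst z \<in> bitvecs n \<and> snd z \<in> bitvecs n) \<longrightarrow>
     emp_rademacher S (Fclass n)
       \<le> C * real n / sqrt (real (length S)) *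
          (SUP \<Phi>\<in>chanI n. Max ((\<lambda>z. \<bar>fPhi n \<Phi> z\<bar>) ` set S))"
proof (intro exI[of _ 2] allI impI)
  fix n :: nat and S :: "(bits \<times> bits) list"
  assume n2: "n \<ge> 2" and m1: "length S \<ge> 1"
  define M where "M = (SUP \<Phi>\<in>chanI n. Max ((\<lambda>z. \<bar>fPhi n \<Phi> z\<bar>) ` set S))"
  have Sne: "set S \<noteq> {}" using m1 by (cases S) auto
  have bdd: "bdd_above ((\<lambda>\<Phi>. Max ((\<lambda>z. \<bar>fPhi n \<Phi> z\<bar>) ` set S)) ` chanI n)"
    using chanI_fin(1) by simp
  have le: "\<bar>fPhi n \<Phi> (S!i)\<bar> \<le> M" if "\<Phi> \<in> chanI n" "i < length S" for \<Phi> i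
  proof -
    have "\<bar>fPhi n \<Phi> (S!i)\<bar> \<le> Max ((\<lambda>z. \<bar>fPhi n \<Phi> z\<bar>) ` set S)"
      using that(2) by (intro Max_ge) auto
    also have "\<dots> \<le> M" unfolding M_def by (rule cSUP_upper[OF that(1) bdd])
    finally show ?thesis .
  qed
  obtain \<Phi>0 where \<Phi>0: "\<Phi>0 \<in> chanI n" using chanI_ne[OF n2] by blast
  have M0: "M \<ge> 0" using le[OF \<Phi>0, of 0] m1 by (meson abs_ge_zero order.trans less_le_trans zero_less_one le_less_trans Suc_le_eq One_nat_def)
  have finF: "finite (Fclass n)" unfolding Fclass_def using chanI_fin(1) by simp
  have neF: "Fclass n \<noteq> {}" unfolding Fclass_def using chanI_ne[OF n2] by simp
  have cF: "card (Fclass n) \<le> 2 ^ (n * n)"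
    unfolding Fclass_def using card_image_le[OF chanI_fin(1)[of n], of "fPhi n"] chanI_fin(2)[of n] by linarith
  have k1: "n * n \<ge> 1" using n2 by (simp add: Suc_le_eq)
  have bdF: "\<bar>g (S!i)\<bar> \<le> M" if "g \<in> Fclass n" "i < length S" for g i
    using that le unfolding Fclass_def by auto
  have "emp_rademacher S (Fclass n) \<le> 2 * sqrt (real (n * n)) * M / sqrt (real (length S))"
    using massart[where k="n*n" and G="Fclass n" and S=S and M=M, OF finF neF cF k1 m1 M0] bdF by blast
  also have "sqrt (real (n * n)) = real n" by simp
  finally show "emp_rademacher S (Fclass n) \<le> 2 * real n / sqrt (real (length S)) * M"
    by simp
qed

end
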